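(* Let $n>24$, $0<\epsilon<\frac13$, and let $m$ be a positive integer with load factor $L=\frac mn>\epsilon^{-2}$. Then $$\mathsf P\left\{\left|\sum_{i=1}^n \frac{k_i(x)(k_i(x)-1)}{m(m-1)}\cdot\frac{1}{\|p\|^2}-1\right|\le 22\,\epsilon\right\}\ \ge\ 1-\frac{10}{9}e^{-L\epsilon^2}.$$
   Context: Standing setup: $U$ is a finite set (the key space) with a probability measure $q$; $T=\{1,\dots,n\}$; $h:U\to T$ is an arbitrary function. $p_i=\sum_{u\in h^{-1}(i)}q(u)$ and $\|p\|^2=\sum_{i=1}^n p_i^2$. $U^m$ carries the product measure $q^m$, and $\mathsf P$ denotes probability under $q^m$ of the event for $x=(x_1,\dots,x_m)\in U^m$. $k_i(x)=|\{j: h(x_j)=i\}|$. *)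

theory Defs
  imports "HOL-Probability.Probability"
begin

definition bucket_count :: "('u \<Rightarrow> nat) \<Rightarrow> nat \<Rightarrow> (nat \<Rightarrow> 'u) \<Rightarrow> nat \<Rightarrow> nat" where
  "bucket_count h m x i = card {j \<in> {..<m}. h (x j) = i}"

definition bucket_prob :: "'u pmf \<Rightarrow> ('u \<Rightarrow> nat) \<Rightarrow> nat \<Rightarrow> real" where
  "bucket_prob q h i = measure_pmf.prob q (h -` {i})"

definition sq_norm_p :: "'u pmf \<Rightarrow> ('u \<Rightarrow> nat) \<Rightarrow> nat \<Rightarrow> real" where
  "sq_norm_p q h n = (\<Sum>i=1..n. (bucket_prob q h i)^2)"

definition sample_pmf :: "'u pmf \<Rightarrow> nat \<Rightarrow> (nat \<Rightarrow> 'u) pmf" where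
  "sample_pmf q m = Pi_pmf {..<m} undefined (\<lambda>_. q)"

end

theory Submission
  imports Defs "HOL-Combinatorics.Permutations"
begin


lemma fin_Pi: "finite (set_pmf (Pi_pmf {..<m::nat} d (\<lambda>_. (q::'u::finite pmf))))"
  by (intro finite_subset[OF set_Pi_pmf_subset'] finite_PiE_dflt) auto

lemma integ_Pi: "integrable (measure_pmf (Pi_pmf {..<m::nat} d (\<lambda>_. (q::'u::finite pmf)))) (f :: _ \<Rightarrow> real)"
  by (rule integrable_measure_pmf_finite[OF fin_Pi])

lemma perm_exists:
  assumes "i < (m::nat)" "j < m" "i \<noteq> j"
  shows "\<exists>\<tau>. \<tau> permutes {..<m} \<and> \<tau> 0 = i \<and> \<tau> 1 = j"
proof -
  define r where "r = Transposition.transpose 0 i"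
  define a where "a = Transposition.transpose (r 1) j"
  have m: "0 < m" "1 < m" using assms by auto
  have r: "r permutes {..<m}" unfolding r_def using assms m by (intro permutes_swap_id) auto
  have r1: "r 1 < m" using r m permutes_in_image by (metis lessThan_iff)
  have a: "a permutes {..<m}" unfolding a_def using assms r1 by (intro permutes_swap_id) auto
  have "r 0 = i" unfolding r_def by simp
  moreover have "r 1 \<noteq> i" unfolding r_def by (cases "i = 1") (auto simp: Transposition.transpose_def)
  ultimately have "(a \<circ> r) 0 = i" "(a \<circ> r) 1 = j" unfolding a_def using assms
    by (auto simp: Transposition.transpose_def)
  note * = this
  show ?thesis
  proof (intro exI conjI)
    show "(a \<circ> r) permutes {..<m}" by (rule permutes_compose[OF r a])
  qed (use * in auto)
qed

lemma sum_perm_pair: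
  fixes f :: "nat \<Rightarrow> nat \<Rightarrow> real"
  assumes "i < m" "j < m" "i \<noteq> j"
  shows "(\<Sum>\<sigma>\<in>{\<sigma>. \<sigma> permutes {..<m}}. f (\<sigma> i) (\<sigma> j)) = (\<Sum>\<sigma>\<in>{\<sigma>. \<sigma> permutes {..<m}}. f (\<sigma> 0) (\<sigma> 1))"
proof -
  obtain \<tau> where t: "\<tau> permutes {..<m}" "\<tau> 0 = i" "\<tau> 1 = j" using perm_exists[OF assms] by blast
  show ?thesis using sum_permutations_compose_right[OF t(1), of "\<lambda>\<sigma>. f (\<sigma> 0) (\<sigma> 1)"] t by simp
qed

lemma sum_perm_all:
  fixes f :: "nat \<Rightarrow> nat \<Rightarrow> real"
  assumes "2 \<le> m"
  shows "(\<Sum>\<sigma>\<in>{\<sigma>. \<sigma> permutes {..<m}}. f (\<sigma> 0) (\<sigma> 1)) * (real m * (real m - 1))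
       = fact m * (\<Sum>a<m. \<Sum>b\<in>{..<m}-{a}. f a b)"
proof -
  let ?S = "{\<sigma>. \<sigma> permutes {..<m}}"
  have "(\<Sum>a<m. \<Sum>b\<in>{..<m}-{a}. (\<Sum>\<sigma>\<in>?S. f (\<sigma> a) (\<sigma> b)))
        = (\<Sum>a<m. \<Sum>b\<in>{..<m}-{a}. (\<Sum>\<sigma>\<in>?S. f (\<sigma> 0) (\<sigma> 1)))"
    by (intro sum.cong refl sum_perm_pair) auto
  also have "\<dots> = (\<Sum>\<sigma>\<in>?S. f (\<sigma> 0) (\<sigma> 1)) * (real m * (real m - 1))"
    using assms by (simp add: card_Diff_singleton of_nat_diff)
  finally have 1: "(\<Sum>a<m. \<Sum>b\<in>{..<m}-{a}. (\<Sum>\<sigma>\<in>?S. f (\<sigma> a) (\<sigma> b))) = (\<Sum>\<sigma>\<in>?S. f (\<sigma> 0) (\<sigma> 1)) * (real m * (real m - 1))" .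
  have "(\<Sum>a<m. \<Sum>b\<in>{..<m}-{a}. (\<Sum>\<sigma>\<in>?S. f (\<sigma> a) (\<sigma> b)))
      = (\<Sum>\<sigma>\<in>?S. \<Sum>a<m. \<Sum>b\<in>{..<m}-{a}. f (\<sigma> a) (\<sigma> b))"
  proof -
    have "(\<Sum>a<m. \<Sum>b\<in>{..<m}-{a}. (\<Sum>\<sigma>\<in>?S. f (\<sigma> a) (\<sigma> b)))
        = (\<Sum>a<m. \<Sum>\<sigma>\<in>?S. \<Sum>b\<in>{..<m}-{a}. f (\<sigma> a) (\<sigma> b))"
      by (intro sum.cong refl sum.swap)
    also have "\<dots> = (\<Sum>\<sigma>\<in>?S. \<Sum>a<m. \<Sum>b\<in>{..<m}-{a}. f (\<sigma> a) (\<sigma> b))"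
      by (rule sum.swap)
    finally show ?thesis .
  qed
  also have "\<dots> = (\<Sum>\<sigma>\<in>?S. \<Sum>a<m. \<Sum>b\<in>{..<m}-{a}. f a b)"
  proof (rule sum.cong[OF refl])
    fix \<sigma> assume "\<sigma> \<in> ?S"
    then have p: "\<sigma> permutes {..<m}" by simp
    have "(\<Sum>a<m. \<Sum>b\<in>{..<m}-{a}. f (\<sigma> a) (\<sigma> b)) = (\<Sum>a<m. \<Sum>b\<in>{..<m}-{\<sigma> a}. f (\<sigma> a) b)"
    proof (rule sum.cong[OF refl])
      fix a assume a: "a \<in> {..<m}"
      have "bij_betw \<sigma> ({..<m}-{a}) ({..<m}-{\<sigma> a})"
        by (rule bij_betw_DiffI[OF permutes_imp_bij[OF p]]) (use a permutes_in_image[OF p] in \<open>auto simp: bij_betw_def\<close>)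
      then show "(\<Sum>b\<in>{..<m}-{a}. f (\<sigma> a) (\<sigma> b)) = (\<Sum>b\<in>{..<m}-{\<sigma> a}. f (\<sigma> a) b)"
        by (rule sum.reindex_bij_betw)
    qed
    also have "\<dots> = (\<Sum>a<m. \<Sum>b\<in>{..<m}-{a}. f a b)"
      using sum.reindex_bij_betw[OF permutes_imp_bij[OF p], of "\<lambda>a. \<Sum>b\<in>{..<m}-{a}. f a b"] by simp
    finally show "(\<Sum>a<m. \<Sum>b\<in>{..<m}-{a}. f (\<sigma> a) (\<sigma> b)) = (\<Sum>a<m. \<Sum>b\<in>{..<m}-{a}. f a b)" .
  qed
  also have "\<dots> = fact m * (\<Sum>a<m. \<Sum>b\<in>{..<m}-{a}. f a b)"
    by (simp add: card_permutations)
  finally show ?thesis using 1 by simp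
qed

definition ee :: "('u \<Rightarrow> nat) \<Rightarrow> 'u \<Rightarrow> 'u \<Rightarrow> real" where
  "ee h u v = (if h u = h v then 1 else 0)"

lemma exp_pair:
  fixes q :: "'u::finite pmf"
  assumes "a < (m::nat)" "b < m" "a \<noteq> b" and hr: "\<And>u. h u \<in> {1..n}"
  shows "measure_pmf.expectation (Pi_pmf {..<m} d (\<lambda>_. q)) (\<lambda>x. exp (\<mu> * ee h (x a) (x b)))
       = 1 + (exp \<mu> - 1) * sq_norm_p q h n"
proof -
  let ?P = "Pi_pmf {..<m} d (\<lambda>_. q)"
  have eq: "exp (\<mu> * ee h u v) = 1 + (exp \<mu> - 1) * (\<Sum>i=1..n. indicator (h -` {i}) u * indicator (h -` {i}) v)" for u v
  proof -
    have "(\<Sum>i=1..n. indicator (h -` {i}) u * indicator (h -` {i}) v :: real) = (\<Sum>i\<in>{1..n}. if i = h u then ee h u v else 0)"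
      by (intro sum.cong) (auto simp: ee_def indicator_def)
    also have "\<dots> = ee h u v" using hr[of u] by simp
    finally show ?thesis by (simp add: ee_def)
  qed
  have single: "measure_pmf.expectation ?P (\<lambda>x. indicator (h -` {i}) (x a) * indicator (h -` {i}) (x b) :: real)
      = bucket_prob q h i ^ 2" for i
  proof -
    define f where "f j u = (if j \<in> {a,b} then indicator (h -` {i}) u else 1 :: real)" for j u
    have "(\<Prod>j\<in>{..<m}. f j (x j)) = indicator (h -` {i}) (x a) * indicator (h -` {i}) (x b)" for x
    proof -
      have "(\<Prod>j\<in>{..<m}. f j (x j)) = (\<Prod>j\<in>{a,b}. f j (x j))"
        by (rule prod.mono_neutral_right) (use assms in \<open>auto simp: f_def\<close>)
      then show ?thesis using assms by (simp add: f_def)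
    qed
    then have "measure_pmf.expectation ?P (\<lambda>x. indicator (h -` {i}) (x a) * indicator (h -` {i}) (x b) :: real)
        = measure_pmf.expectation ?P (\<lambda>x. \<Prod>j\<in>{..<m}. f j (x j))" by simp
    also have "\<dots> = (\<Prod>j\<in>{..<m}. measure_pmf.expectation q (f j))"
      by (intro expectation_prod_Pi_pmf) (auto simp: f_def integrable_measure_pmf_finite)
    also have "\<dots> = (\<Prod>j\<in>{..<m}. if j \<in> {a,b} then bucket_prob q h i else 1)"
      by (intro prod.cong) (auto simp: f_def[abs_def] bucket_prob_def)
    also have "\<dots> = bucket_prob q h i ^ 2"
    proof -
      have "(\<Prod>j\<in>{..<m}. if j \<in> {a,b} then bucket_prob q h i else 1) = (\<Prod>j\<in>{a,b}. if j \<in> {a,b} then bucket_prob q h i else 1)"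
        by (rule prod.mono_neutral_right) (use assms in auto)
      then show ?thesis using assms by (simp add: power2_eq_square)
    qed
    finally show ?thesis .
  qed
  have "measure_pmf.expectation ?P (\<lambda>x. exp (\<mu> * ee h (x a) (x b)))
      = measure_pmf.expectation ?P (\<lambda>x. 1 + (exp \<mu> - 1) * (\<Sum>i=1..n. indicator (h -` {i}) (x a) * indicator (h -` {i}) (x b)))"
    by (simp only: eq)
  also have "\<dots> = 1 + (exp \<mu> - 1) * (\<Sum>i=1..n. measure_pmf.expectation ?P (\<lambda>x. indicator (h -` {i}) (x a) * indicator (h -` {i}) (x b)))"
  proof -
    let ?S = "\<lambda>x. (\<Sum>i=1..n. indicator (h -` {i}) (x a) * indicator (h -` {i}) (x b) :: real)"
    have i1: "measure_pmf.expectation ?P (\<lambda>x. 1 + (exp \<mu> - 1) * ?S x) = measure_pmf.expectation ?P (\<lambda>_. 1) + measure_pmf.expectation ?P (\<lambda>x. (exp \<mu> - 1) * ?S x)"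
      by (rule Bochner_Integration.integral_add[OF integ_Pi integ_Pi])
    have i2: "measure_pmf.expectation ?P (\<lambda>_. 1::real) = 1" by simp
    have i3: "measure_pmf.expectation ?P (\<lambda>x. (exp \<mu> - 1) * ?S x) = (exp \<mu> - 1) * measure_pmf.expectation ?P ?S"
      by (rule integral_mult_right_zero)
    have i4: "measure_pmf.expectation ?P ?S = (\<Sum>i=1..n. measure_pmf.expectation ?P (\<lambda>x. indicator (h -` {i}) (x a) * indicator (h -` {i}) (x b)))"
      by (rule Bochner_Integration.integral_sum) (rule integ_Pi)
    show ?thesis by (simp only: i1 i2 i3 i4)
  qed
  also have "\<dots> = 1 + (exp \<mu> - 1) * sq_norm_p q h n"
    by (simp only: single sq_norm_p_def)
  finally show ?thesis .
qed



lemma exp_prod_pairs: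
  fixes q :: "'u::finite pmf"
  assumes km: "2*k \<le> (m::nat)" and hr: "\<And>u. h u \<in> {1..n}"
  shows "measure_pmf.expectation (Pi_pmf {..<m} d (\<lambda>_. q))
           (\<lambda>x. \<Prod>l<k. exp (\<mu> * ee h (x (2*l)) (x (2*l+1)))) = (1 + (exp \<mu> - 1) * sq_norm_p q h n)^k"
proof -
  let ?P = "Pi_pmf {..<m} d (\<lambda>_. q)"
  have ind: "prob_space.indep_vars (measure_pmf ?P) (\<lambda>_. count_space UNIV) (\<lambda>x f. f x) {..<m}" by (rule indep_vars_Pi_pmf) simp
  define K where "K l = {2*l, 2*l+1}" for l :: nat
  have ind2: "prob_space.indep_vars (measure_pmf ?P) (\<lambda>l. PiM (K l) (\<lambda>_. count_space UNIV)) (\<lambda>l \<omega>. restrict (\<lambda>i. \<omega> i) (K l)) {..<k}"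
    using prob_space.indep_vars_restrict[OF measure_pmf.prob_space_axioms ind, of "{..<k}" K] km
    by (auto simp: K_def disjoint_family_on_def)
  define Y where "Y l r = exp (\<mu> * ee h (r (2*l)) (r (2*l+1)))" for l :: nat and r :: "nat \<Rightarrow> 'u"
  have meas: "Y l \<in> borel_measurable (PiM (K l) (\<lambda>_. count_space UNIV))" for l
    unfolding Y_def ee_def K_def by measurable
  have ind3: "prob_space.indep_vars (measure_pmf ?P) (\<lambda>_. borel) (\<lambda>l \<omega>. Y l (restrict (\<lambda>i. \<omega> i) (K l))) {..<k}"
    by (rule prob_space.indep_vars_compose2[OF measure_pmf.prob_space_axioms ind2]) (rule meas)
  have Yr: "Y l (restrict (\<lambda>i. \<omega> i) (K l)) = exp (\<mu> * ee h (\<omega> (2*l)) (\<omega> (2*l+1)))" for l \<omega>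
    by (simp add: Y_def K_def)
  have "measure_pmf.expectation ?P (\<lambda>x. \<Prod>l<k. exp (\<mu> * ee h (x (2*l)) (x (2*l+1))))
      = measure_pmf.expectation ?P (\<lambda>x. \<Prod>l<k. Y l (restrict (\<lambda>i. x i) (K l)))"
    by (simp only: Yr)
  also have "\<dots> = (\<Prod>l<k. measure_pmf.expectation ?P (\<lambda>x. Y l (restrict (\<lambda>i. x i) (K l))))"
    by (rule prob_space.indep_vars_lebesgue_integral[OF measure_pmf.prob_space_axioms _ ind3]) (auto intro: integ_Pi)
  also have "\<dots> = (\<Prod>l<k. (1 + (exp \<mu> - 1) * sq_norm_p q h n))"
  proof (rule prod.cong[OF refl])
    fix l assume "l \<in> {..<k}"
    then show "measure_pmf.expectation ?P (\<lambda>x. Y l (restrict (\<lambda>i. x i) (K l))) = 1 + (exp \<mu> - 1) * sq_norm_p q h n"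
      unfolding Yr using km by (intro exp_pair hr) auto
  qed
  finally show ?thesis by simp
qed



definition coll :: "('u \<Rightarrow> nat) \<Rightarrow> nat \<Rightarrow> (nat \<Rightarrow> 'u) \<Rightarrow> real" where
  "coll h m x = (\<Sum>a<m. \<Sum>b\<in>{..<m}-{a}. ee h (x a) (x b))"

definition Bp :: "('u \<Rightarrow> nat) \<Rightarrow> nat \<Rightarrow> (nat \<Rightarrow> 'u) \<Rightarrow> real" where
  "Bp h k y = (\<Sum>l<k. ee h (y (2*l)) (y (2*l+1)))"

lemma ind_sum:
  assumes hr: "\<And>u. h u \<in> {1..n}"
  shows "(\<Sum>i=1..n. (if h u = i then 1 else 0) * (if h v = i then 1 else 0 :: real)) = ee h u v"
proof -
  have "(\<Sum>i=1..n. (if h u = i then 1 else 0) * (if h v = i then 1 else 0 :: real))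
      = (\<Sum>i\<in>{1..n}. if i = h u then ee h u v else 0)" by (intro sum.cong) (auto simp: ee_def)
  also have "\<dots> = ee h u v" using hr[of u] by simp
  finally show ?thesis .
qed

lemma ind_sum1:
  fixes h :: "'u \<Rightarrow> nat"
  assumes hr: "\<And>u. h u \<in> {1..n}"
  shows "(\<Sum>i=1..n. (if h u = i then 1 else 0 :: real)) = 1"
proof -
  have "(\<Sum>i=1..n. (if h u = i then 1 else 0 :: real)) = (\<Sum>i\<in>{1..n}. if i = h u then 1 else 0)"
    by (intro sum.cong) auto
  also have "\<dots> = 1" using hr[of u] by (subst sum.delta) auto
  finally show ?thesis .
qed

lemma card_sum: "real (card {j\<in>{..<m::nat}. P j}) = (\<Sum>j<m. if P j then 1 else 0)"
proof -
  have "(\<Sum>j<m. if P j then 1 else 0 :: real) = (\<Sum>j\<in>{j\<in>{..<m}. P j}. 1)"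
    by (rule sum.mono_neutral_cong_right) auto
  then show ?thesis by simp
qed

lemma coll_eq:
  assumes hr: "\<And>u. h u \<in> {1..n}"
  shows "(\<Sum>i=1..n. real (bucket_count h m x i) * (real (bucket_count h m x i) - 1)) = coll h m x"
proof -
  define I where "I i u = (if h u = i then 1 else 0 :: real)" for i u
  have kk: "real (bucket_count h m x i) = (\<Sum>j<m. I i (x j))" for i
    unfolding bucket_count_def I_def by (rule card_sum)
  have "(\<Sum>i=1..n. real (bucket_count h m x i) * (real (bucket_count h m x i) - 1))
      = (\<Sum>i=1..n. real (bucket_count h m x i) * real (bucket_count h m x i)) - (\<Sum>i=1..n. real (bucket_count h m x i))"
    by (simp add: algebra_simps sum_subtractf)
  also have "(\<Sum>i=1..n. real (bucket_count h m x i) * real (bucket_count h m x i)) = (\<Sum>a<m. \<Sum>b<m. ee h (x a) (x b))"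
  proof -
    have "(\<Sum>i=1..n. real (bucket_count h m x i) * real (bucket_count h m x i))
        = (\<Sum>i=1..n. \<Sum>a<m. \<Sum>b<m. I i (x a) * I i (x b))"
      unfolding kk by (simp add: sum_product)
    also have "\<dots> = (\<Sum>a<m. \<Sum>i=1..n. \<Sum>b<m. I i (x a) * I i (x b))" by (rule sum.swap)
    also have "\<dots> = (\<Sum>a<m. \<Sum>b<m. \<Sum>i=1..n. I i (x a) * I i (x b))"
      by (rule sum.cong[OF refl]) (rule sum.swap)
    also have "\<dots> = (\<Sum>a<m. \<Sum>b<m. ee h (x a) (x b))"
      unfolding I_def ind_sum[OF hr] by (simp add: ee_def)
    finally show ?thesis .
  qed
  also have "(\<Sum>i=1..n. real (bucket_count h m x i)) = m"
  proof -
    have "(\<Sum>i=1..n. real (bucket_count h m x i)) = (\<Sum>i=1..n. \<Sum>a<m. I i (x a))" unfolding kk ..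
    also have "\<dots> = (\<Sum>a<m. \<Sum>i=1..n. I i (x a))" by (rule sum.swap)
    also have "\<dots> = m" unfolding I_def ind_sum1[OF hr] by simp
    finally show ?thesis .
  qed
  also have "(\<Sum>a<m. \<Sum>b<m. ee h (x a) (x b)) - real m = coll h m x"
  proof -
    have "coll h m x = (\<Sum>a<m. (\<Sum>b<m. ee h (x a) (x b)) - 1)"
      unfolding coll_def by (intro sum.cong refl) (simp add: sum_diff1 ee_def)
    also have "\<dots> = (\<Sum>a<m. \<Sum>b<m. ee h (x a) (x b)) - real m" by (simp add: sum_subtractf)
    finally show ?thesis by simp
  qed
  finally show ?thesis .
qed

lemma sym:
  assumes "2 \<le> m" "0 < k" "2*k \<le> m"
  shows "coll h m x / (real m * (real m - 1))
       = (\<Sum>\<sigma>\<in>{\<sigma>. \<sigma> permutes {..<m}}. Bp h k (x \<circ> \<sigma>)) / (real k * fact m)"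
proof -
  let ?S = "{\<sigma>. \<sigma> permutes {..<m}}"
  define f where "f a b = ee h (x a) (x b)" for a b
  have "(\<Sum>\<sigma>\<in>?S. Bp h k (x \<circ> \<sigma>)) = (\<Sum>\<sigma>\<in>?S. \<Sum>l<k. f (\<sigma> (2*l)) (\<sigma> (2*l+1)))"
    unfolding Bp_def f_def by simp
  also have "\<dots> = (\<Sum>l<k. \<Sum>\<sigma>\<in>?S. f (\<sigma> (2*l)) (\<sigma> (2*l+1)))" by (rule sum.swap)
  also have "\<dots> = (\<Sum>l<k. \<Sum>\<sigma>\<in>?S. f (\<sigma> 0) (\<sigma> 1))"
  proof (rule sum.cong[OF refl])
    fix l assume "l \<in> {..<k}"
    then show "(\<Sum>\<sigma>\<in>?S. f (\<sigma> (2*l)) (\<sigma> (2*l+1))) = (\<Sum>\<sigma>\<in>?S. f (\<sigma> 0) (\<sigma> 1))"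
      using assms by (intro sum_perm_pair) auto
  qed
  also have "\<dots> = real k * (\<Sum>\<sigma>\<in>?S. f (\<sigma> 0) (\<sigma> 1))" by simp
  finally have 1: "(\<Sum>\<sigma>\<in>?S. Bp h k (x \<circ> \<sigma>)) = real k * (\<Sum>\<sigma>\<in>?S. f (\<sigma> 0) (\<sigma> 1))" .
  have 2: "(\<Sum>\<sigma>\<in>?S. f (\<sigma> 0) (\<sigma> 1)) * (real m * (real m - 1)) = fact m * coll h m x"
    unfolding coll_def f_def by (rule sum_perm_all) fact
  have "real m * (real m - 1) > 0" using assms by simp
  moreover have "fact m > (0::real)" by simp
  ultimately show ?thesis using 1 2 assms by (simp add: field_simps)
qed



lemma mgf:
  fixes q :: "'u::finite pmf"
  assumes hr: "\<And>u. h u \<in> {1..n}" and m2: "2 \<le> m" and k0: "0 < k" and km: "2*k \<le> m"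
  shows "measure_pmf.expectation (Pi_pmf {..<m} d (\<lambda>_. q)) (\<lambda>x. exp (\<theta> * (coll h m x / (real m * (real m - 1)))))
       \<le> (1 + (exp (\<theta> / k) - 1) * sq_norm_p q h n) ^ k"
proof -
  let ?P = "Pi_pmf {..<m} d (\<lambda>_. q)"
  let ?S = "{\<sigma>. \<sigma> permutes {..<m}}"
  have cardS: "card ?S = fact m" by (rule card_permutations) auto
  have finS: "finite ?S" by (rule finite_permutations) auto
  have Sne: "?S \<noteq> {}" using permutes_id[of "{..<m}"] by blast
  have pw: "exp (\<theta> * (coll h m x / (real m * (real m - 1))))
      \<le> (\<Sum>\<sigma>\<in>?S. (1 / fact m) * exp (\<theta> / k * Bp h k (x \<circ> \<sigma>)))" for x
  proof -
    have "exp (\<Sum>\<sigma>\<in>?S. (1 / fact m) *\<^sub>R (\<theta> / k * Bp h k (x \<circ> \<sigma>)))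
        \<le> (\<Sum>\<sigma>\<in>?S. (1 / fact m) * exp (\<theta> / k * Bp h k (x \<circ> \<sigma>)))"
      by (rule convex_on_sum[OF finS Sne exp_convex]) (auto simp: cardS)
    moreover have "(\<Sum>\<sigma>\<in>?S. (1 / fact m) *\<^sub>R (\<theta> / k * Bp h k (x \<circ> \<sigma>)))
        = \<theta> * (coll h m x / (real m * (real m - 1)))"
    proof -
      have "(\<Sum>\<sigma>\<in>?S. (1 / fact m) *\<^sub>R (\<theta> / k * Bp h k (x \<circ> \<sigma>)))
          = \<theta> / (real k * fact m) * (\<Sum>\<sigma>\<in>?S. Bp h k (x \<circ> \<sigma>))"
        by (subst sum_distrib_left) (rule sum.cong[OF refl], simp add: field_simps)
      then show ?thesis unfolding sym[OF m2 k0 km] by simp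
    qed
    ultimately show ?thesis by simp
  qed
  have inv: "measure_pmf.expectation ?P (\<lambda>x. exp (\<theta> / k * Bp h k (x \<circ> \<sigma>)))
      = measure_pmf.expectation ?P (\<lambda>x. exp (\<theta> / k * Bp h k x))" if "\<sigma> \<in> ?S" for \<sigma>
  proof -
    have p: "\<sigma> permutes {..<m}" using that by simp
    have "?P = map_pmf (\<lambda>g. g \<circ> \<sigma>) ?P"
      by (rule Pi_pmf_bij_betw) (use p permutes_imp_bij[OF p] in \<open>auto simp: permutes_not_in\<close>)
    then have "measure_pmf.expectation ?P (\<lambda>x. exp (\<theta> / k * Bp h k x))
        = measure_pmf.expectation (map_pmf (\<lambda>g. g \<circ> \<sigma>) ?P) (\<lambda>x. exp (\<theta> / k * Bp h k x))"
      by simp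
    also have "\<dots> = measure_pmf.expectation ?P (\<lambda>x. exp (\<theta> / k * Bp h k (x \<circ> \<sigma>)))"
      by (rule integral_map_pmf)
    finally show ?thesis by simp
  qed
  have "measure_pmf.expectation ?P (\<lambda>x. exp (\<theta> * (coll h m x / (real m * (real m - 1)))))
      \<le> measure_pmf.expectation ?P (\<lambda>x. \<Sum>\<sigma>\<in>?S. (1 / fact m) * exp (\<theta> / k * Bp h k (x \<circ> \<sigma>)))"
    by (rule integral_mono[OF integ_Pi integ_Pi pw])
  also have "\<dots> = (\<Sum>\<sigma>\<in>?S. (1 / fact m) * measure_pmf.expectation ?P (\<lambda>x. exp (\<theta> / k * Bp h k (x \<circ> \<sigma>))))"
    by (subst Bochner_Integration.integral_sum[OF integ_Pi]) (simp only: integral_mult_right_zero)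
  also have "\<dots> = (\<Sum>\<sigma>\<in>?S. (1 / fact m) * measure_pmf.expectation ?P (\<lambda>x. exp (\<theta> / k * Bp h k x)))"
    by (rule sum.cong[OF refl]) (simp only: inv)
  also have "\<dots> = measure_pmf.expectation ?P (\<lambda>x. exp (\<theta> / k * Bp h k x))"
    by (simp add: cardS)
  also have "\<dots> = measure_pmf.expectation ?P (\<lambda>x. \<Prod>l<k. exp (\<theta> / k * ee h (x (2*l)) (x (2*l+1))))"
    unfolding Bp_def sum_distrib_left exp_sum[OF finite_lessThan] ..
  also have "\<dots> = (1 + (exp (\<theta> / k) - 1) * sq_norm_p q h n) ^ k"
    by (rule exp_prod_pairs[OF km hr])
  finally show ?thesis .
qed



lemma s_facts:
  fixes q :: "'u::finite pmf" and h :: "'u \<Rightarrow> nat"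
  assumes hr: "\<And>u. h u \<in> {1..n}" and n0: "n > 0"
  shows "sq_norm_p q h n \<ge> 1 / real n" "sq_norm_p q h n \<le> 1"
proof -
  let ?p = "bucket_prob q h"
  have "(\<Sum>i\<in>{1..n}. measure_pmf.prob q (h -` {i})) = measure_pmf.prob q (\<Union>i\<in>{1..n}. h -` {i})"
    by (rule measure_pmf.finite_measure_finite_Union[symmetric]) (auto simp: disjoint_family_on_def)
  also have "(\<Union>i\<in>{1..n}. h -` {i}) = UNIV" using hr by auto
  finally have sum1: "(\<Sum>i=1..n. ?p i) = 1" by (simp add: bucket_prob_def)
  have p01: "0 \<le> ?p i" "?p i \<le> 1" for i by (auto simp: bucket_prob_def)
  have "sq_norm_p q h n \<le> (\<Sum>i=1..n. ?p i)"
    unfolding sq_norm_p_def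
  proof (rule sum_mono)
    fix i show "?p i ^ 2 \<le> ?p i" using p01[of i] by (simp add: power2_eq_square mult_left_le)
  qed
  then show "sq_norm_p q h n \<le> 1" using sum1 by simp
  have "0 \<le> (\<Sum>i=1..n. (?p i - 1 / real n)^2)" by (rule sum_nonneg) simp
  also have "(\<Sum>i=1..n. (?p i - 1 / real n)^2) = sq_norm_p q h n - 2 / real n * (\<Sum>i=1..n. ?p i) + real n * (1 / real n)^2"
    by (simp add: power2_diff sum.distrib sum_subtractf sum_distrib_left sq_norm_p_def algebra_simps)
  also have "\<dots> = sq_norm_p q h n - 1 / real n" using n0 sum1 by (simp add: power2_eq_square field_simps)
  finally show "sq_norm_p q h n \<ge> 1 / real n" by simp
qed

lemma exp_neg_bound:
  fixes \<mu> :: real assumes "0 \<le> \<mu>"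
  shows "exp (-\<mu>) \<le> 1 - \<mu> + \<mu>^2"
proof -
  have e: "1 + \<mu> + \<mu>^2/2 \<le> exp \<mu>" by (rule exp_lower_Taylor_quadratic) fact
  have pos: "0 < 1 + \<mu> + \<mu>^2/2" using assms by (simp add: add_pos_nonneg)
  have "(1 - \<mu> + \<mu>^2) * (1 + \<mu> + \<mu>^2/2) = 1 + \<mu>^2/2 + \<mu>^3/2 + \<mu>^4/2"
    unfolding power2_eq_square power3_eq_cube power4_eq_xxxx by (simp add: field_simps)
  also have "\<dots> \<ge> 1" using assms by simp
  finally have 1: "1 \<le> (1 - \<mu> + \<mu>^2) * (1 + \<mu> + \<mu>^2/2)" .
  have "exp (-\<mu>) = 1 / exp \<mu>" by (simp add: exp_minus field_simps)
  also have "\<dots> \<le> 1 / (1 + \<mu> + \<mu>^2/2)" using e pos by (intro divide_left_mono) auto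
  also have "\<dots> \<le> 1 - \<mu> + \<mu>^2" using 1 pos by (simp add: divide_simps)
  finally show ?thesis .
qed

lemma pow_exp:
  assumes "0 \<le> s" "s \<le> (1::real)"
  shows "(1 + (exp y - 1) * s) ^ k \<le> exp (real k * s * (exp y - 1))"
proof -
  have "0 \<le> 1 + (exp y - 1) * s"
  proof -
    have "1 + (exp y - 1) * s = (1 - s) + exp y * s" by (simp add: algebra_simps)
    also have "\<dots> \<ge> 0" using assms by simp
    finally show ?thesis .
  qed
  then have "(1 + (exp y - 1) * s) ^ k \<le> exp ((exp y - 1) * s) ^ k"
    by (intro power_mono) (simp_all add: add.commute)
  also have "\<dots> = exp (real k * s * (exp y - 1))" by (simp add: exp_of_nat_mult[symmetric] algebra_simps)
  finally show ?thesis .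
qed

lemma markov_exp:
  fixes P :: "'a pmf" and F :: "'a \<Rightarrow> real"
  assumes "integrable P (\<lambda>x. exp (F x))"
  shows "measure_pmf.prob P {x. c \<le> F x} \<le> measure_pmf.expectation P (\<lambda>x. exp (F x)) / exp c"
proof -
  have "measure_pmf.prob P {x. c \<le> F x} = measure_pmf.prob P {x\<in>space (measure_pmf P). exp c \<le> exp (F x)}"
    by simp
  also have "\<dots> \<le> measure_pmf.expectation P (\<lambda>x. exp (F x)) / exp c"
    by (rule integral_Markov_inequality_measure[OF assms, of UNIV]) auto
  finally show ?thesis .
qed



lemma tails:
  fixes q :: "'u::finite pmf"
  assumes hr: "\<And>u. h u \<in> {1..n}" and m2: "2 \<le> m" and k0: "0 < k" and km: "2*k \<le> m"
    and mu: "0 \<le> \<mu>" "\<mu> \<le> 1" and n0: "n > 0"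
  shows "measure_pmf.prob (Pi_pmf {..<m} d (\<lambda>_. q)) {x. (1+t) * sq_norm_p q h n \<le> coll h m x / (real m * (real m - 1))}
           \<le> exp (real k * sq_norm_p q h n * (\<mu>^2 - \<mu>*t))" (is ?U)
    and "measure_pmf.prob (Pi_pmf {..<m} d (\<lambda>_. q)) {x. coll h m x / (real m * (real m - 1)) \<le> (1-t) * sq_norm_p q h n}
           \<le> exp (real k * sq_norm_p q h n * (\<mu>^2 - \<mu>*t))" (is ?L)
proof -
  let ?P = "Pi_pmf {..<m} d (\<lambda>_. q)"
  define s where "s = sq_norm_p q h n"
  define R where "R x = coll h m x / (real m * (real m - 1))" for x
  have sf: "1 / real n \<le> s" "s \<le> 1" using s_facts[where h=h and n=n and q=q, OF hr n0] unfolding s_def by auto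
  have s01: "0 \<le> s" "s \<le> 1" using sf by (auto intro: order.trans[rotated])
  have kpos: "real k > 0" using k0 by simp
  have km0: "0 \<le> real k * \<mu>" using mu by simp
  have "measure_pmf.prob ?P {x. (1+t) * s \<le> R x} \<le> measure_pmf.prob ?P {x. real k * \<mu> * ((1+t) * s) \<le> real k * \<mu> * R x}"
    by (rule measure_pmf.finite_measure_mono) (auto intro: mult_left_mono[OF _ km0])
  also have "\<dots> \<le> measure_pmf.expectation ?P (\<lambda>x. exp (real k * \<mu> * R x)) / exp (real k * \<mu> * ((1+t) * s))"
    by (rule markov_exp[OF integ_Pi])
  also have "\<dots> \<le> exp (real k * s * (\<mu> + \<mu>^2)) / exp (real k * \<mu> * ((1+t) * s))"
  proof (rule divide_right_mono)
    have "measure_pmf.expectation ?P (\<lambda>x. exp (real k * \<mu> * R x)) \<le> (1 + (exp (real k * \<mu> / k) - 1) * s) ^ k"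
      using mgf[where h=h and n=n and m=m and k=k and d=d and q=q and \<theta>="real k * \<mu>", OF hr m2 k0 km] unfolding R_def s_def .
    also have "\<dots> = (1 + (exp \<mu> - 1) * s) ^ k" using kpos by simp
    also have "\<dots> \<le> exp (real k * s * (exp \<mu> - 1))" by (rule pow_exp[OF s01])
    also have "\<dots> \<le> exp (real k * s * (\<mu> + \<mu>^2))"
      using exp_bound[OF mu] s01 kpos by (simp add: mult_left_mono)
    finally show "measure_pmf.expectation ?P (\<lambda>x. exp (real k * \<mu> * R x)) \<le> exp (real k * s * (\<mu> + \<mu>^2))" .
  qed simp
  also have "\<dots> = exp (real k * s * (\<mu>^2 - \<mu>*t))"
    by (simp add: exp_diff[symmetric] algebra_simps)
  finally show ?U unfolding s_def R_def .
  have "measure_pmf.prob ?P {x. R x \<le> (1-t) * s} \<le> measure_pmf.prob ?P {x. -(real k * \<mu>) * ((1-t) * s) \<le> -(real k * \<mu>) * R x}"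
    by (rule measure_pmf.finite_measure_mono) (auto intro: mult_left_mono[OF _ km0])
  also have "\<dots> \<le> measure_pmf.expectation ?P (\<lambda>x. exp (-(real k * \<mu>) * R x)) / exp (-(real k * \<mu>) * ((1-t) * s))"
    by (rule markov_exp[OF integ_Pi])
  also have "\<dots> \<le> exp (real k * s * (-\<mu> + \<mu>^2)) / exp (-(real k * \<mu>) * ((1-t) * s))"
  proof (rule divide_right_mono)
    have "measure_pmf.expectation ?P (\<lambda>x. exp (-(real k * \<mu>) * R x)) \<le> (1 + (exp (-(real k * \<mu>) / k) - 1) * s) ^ k"
      using mgf[where h=h and n=n and m=m and k=k and d=d and q=q and \<theta>="-(real k * \<mu>)", OF hr m2 k0 km] unfolding R_def s_def .
    also have "\<dots> = (1 + (exp (-\<mu>) - 1) * s) ^ k" using kpos by simp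
    also have "\<dots> \<le> exp (real k * s * (exp (-\<mu>) - 1))" by (rule pow_exp[OF s01])
    also have "\<dots> \<le> exp (real k * s * (-\<mu> + \<mu>^2))"
      using exp_neg_bound[OF mu(1)] s01 kpos by (simp add: mult_left_mono)
    finally show "measure_pmf.expectation ?P (\<lambda>x. exp (-(real k * \<mu>) * R x)) \<le> exp (real k * s * (-\<mu> + \<mu>^2))" .
  qed simp
  also have "\<dots> = exp (real k * s * (\<mu>^2 - \<mu>*t))"
    by (simp add: exp_diff[symmetric] algebra_simps)
  finally show ?L unfolding s_def R_def .
qed



theorem corollary2:
  fixes q :: "'u::finite pmf" and h :: "'u \<Rightarrow> nat" and n m :: nat and \<epsilon> :: real
  assumes h_range: "\<And>u. h u \<in> {1..n}"
    and n_gt: "n > 24"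
    and eps_pos: "0 < \<epsilon>" and eps_lt: "\<epsilon> < 1/3"
    and m_pos: "m > 0"
    and load: "real m / real n > 1 / \<epsilon>^2"
  shows "measure_pmf.prob (sample_pmf q m)
           {x. \<bar>(\<Sum>i=1..n. real (bucket_count h m x i) * (real (bucket_count h m x i) - 1)
                              / (real m * (real m - 1))) / sq_norm_p q h n - 1\<bar> \<le> 22 * \<epsilon>}
         \<ge> 1 - 10/9 * exp (- (real m / real n) * \<epsilon>^2)"
proof -
  define P where "P = Pi_pmf {..<m} undefined (\<lambda>_. q)"
  define s where "s = sq_norm_p q h n"
  define k where "k = m div 2"
  define t where "t = 22 * \<epsilon>"
  define \<mu> where "\<mu> = t / 8"
  define L where "L = real m / real n"
  define R where "R x = coll h m x / (real m * (real m - 1))" for x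
  have n0: "n > 0" using n_gt by simp
  have rn: "real n > 24" using n_gt by simp
  have e2pos: "\<epsilon>^2 > 0" using eps_pos by simp
  have e2: "\<epsilon>^2 < 1/9"
  proof -
    have "\<epsilon>^2 < (1/3)^2" using eps_pos eps_lt by (intro power_strict_mono) auto
    then show ?thesis by (simp add: power2_eq_square)
  qed
  have Le: "L * \<epsilon>^2 > 1"
  proof -
    have "1 / \<epsilon>^2 < L" using load unfolding L_def .
    then show ?thesis using e2pos by (simp add: field_simps)
  qed
  have L9: "L > 9"
  proof -
    have "1 / \<epsilon>^2 > 9" using e2 e2pos by (simp add: field_simps)
    then show ?thesis using load unfolding L_def by linarith
  qed
  have mbig: "real m > 9 * real n" using L9 n0 unfolding L_def by (simp add: field_simps)
  have m2: "2 \<le> m" using mbig rn by linarith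
  have k0: "0 < k" using m2 unfolding k_def by simp
  have km: "2 * k \<le> m" unfolding k_def by simp
  have kge: "2 * real k \<ge> real m - 1"
  proof -
    have "m \<le> 2 * k + 1" unfolding k_def by simp
    then have "real m \<le> 2 * real k + 1" by linarith
    then show ?thesis by simp
  qed
  have mu: "0 \<le> \<mu>" "\<mu> \<le> 1" using eps_pos eps_lt unfolding \<mu>_def t_def by auto
  have sf: "1 / real n \<le> s" "s \<le> 1" using s_facts[where h=h and n=n and q=q, OF h_range n0] unfolding s_def by auto
  have spos: "s > 0" using sf n0 by (auto intro: less_le_trans[rotated])
  have seteq: "{x. \<bar>(\<Sum>i=1..n. real (bucket_count h m x i) * (real (bucket_count h m x i) - 1)
                              / (real m * (real m - 1))) / sq_norm_p q h n - 1\<bar> \<le> 22 * \<epsilon>}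
             = {x. \<bar>R x / s - 1\<bar> \<le> t}"
    unfolding R_def s_def t_def sum_divide_distrib[symmetric] coll_eq[where h=h and n=n, OF h_range] ..
  define U where "U = {x. (1+t) * s \<le> R x}"
  define W where "W = {x. R x \<le> (1-t) * s}"
  have bad: "UNIV - {x. \<bar>R x / s - 1\<bar> \<le> t} \<subseteq> U \<union> W"
  proof
    fix x assume "x \<in> UNIV - {x. \<bar>R x / s - 1\<bar> \<le> t}"
    then have "\<bar>R x / s - 1\<bar> > t" by auto
    then have "R x / s > 1 + t \<or> R x / s < 1 - t" by linarith
    then show "x \<in> U \<union> W" unfolding U_def W_def using spos by (auto simp: field_simps)
  qed
  have bU: "measure_pmf.prob P U \<le> exp (real k * s * (\<mu>^2 - \<mu>*t))"
    unfolding P_def U_def R_def s_def by (rule tails(1)[OF h_range m2 k0 km mu n0])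
  have bW: "measure_pmf.prob P W \<le> exp (real k * s * (\<mu>^2 - \<mu>*t))"
    unfolding P_def W_def R_def s_def by (rule tails(2)[OF h_range m2 k0 km mu n0])
  have "measure_pmf.prob P (UNIV - {x. \<bar>R x / s - 1\<bar> \<le> t}) \<le> measure_pmf.prob P (U \<union> W)"
    by (rule measure_pmf.finite_measure_mono[OF bad]) simp
  also have "\<dots> \<le> measure_pmf.prob P U + measure_pmf.prob P W"
    by (rule measure_subadditive) (auto simp: measure_pmf.emeasure_eq_measure)
  finally have pbad: "measure_pmf.prob P (UNIV - {x. \<bar>R x / s - 1\<bar> \<le> t}) \<le> 2 * exp (real k * s * (\<mu>^2 - \<mu>*t))"
    using bU bW by simp
  have pgood: "measure_pmf.prob P {x. \<bar>R x / s - 1\<bar> \<le> t} = 1 - measure_pmf.prob P (UNIV - {x. \<bar>R x / s - 1\<bar> \<le> t})"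
    using measure_pmf.prob_compl[of "{x. \<bar>R x / s - 1\<bar> \<le> t}" P] by simp
  have expo: "real k * s * (\<mu>^2 - \<mu>*t) \<le> - (L * \<epsilon>^2) - 1"
  proof -
    have id: "\<mu>^2 - \<mu>*t = - (847/16) * \<epsilon>^2" unfolding \<mu>_def t_def by (simp add: power2_eq_square field_simps)
    have ks: "real k * s \<ge> (real m - 1) / (2 * real n)"
    proof -
      have "real k * s \<ge> real k * (1 / real n)" using sf by (intro mult_left_mono) auto
      moreover have "real k * (1 / real n) \<ge> (real m - 1) / (2 * real n)"
      proof -
        have "(real m - 1) / (2 * real n) \<le> (2 * real k) / (2 * real n)" using kge n0 by (intro divide_right_mono) auto
        then show ?thesis by simp
      qed
      ultimately show ?thesis by linarith
    qed
    have "real k * s * (\<mu>^2 - \<mu>*t) = - (847/16) * \<epsilon>^2 * (real k * s)" unfolding id by simp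
    also have "\<dots> \<le> - (847/16) * \<epsilon>^2 * ((real m - 1) / (2 * real n))"
      using ks e2pos by (intro mult_left_mono_neg) auto
    also have "\<dots> = - (847/32) * (L * \<epsilon>^2) + (847/32) * (\<epsilon>^2 / real n)"
      unfolding L_def using n0 by (simp add: field_simps)
    also have "\<dots> \<le> - (L * \<epsilon>^2) - 1"
    proof -
      have "\<epsilon>^2 / real n \<le> (1/9) / 24" using e2 rn e2pos by (intro frac_le) auto
      then show ?thesis using Le by linarith
    qed
    finally show ?thesis .
  qed
  have e1: "2 * exp (-1) \<le> (1::real)"
  proof -
    have "1 + 1 \<le> exp (1::real)" by (rule exp_ge_add_one_self)
    then show ?thesis by (simp add: exp_minus field_simps)
  qed
  have "2 * exp (real k * s * (\<mu>^2 - \<mu>*t)) \<le> 2 * exp (- (L * \<epsilon>^2) - 1)"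
    using expo by simp
  also have "\<dots> = (2 * exp (-1)) * exp (- (L * \<epsilon>^2))" by (simp add: exp_diff exp_minus field_simps)
  also have "\<dots> \<le> 1 * exp (- (L * \<epsilon>^2))" using e1 by (intro mult_right_mono) auto
  also have "\<dots> \<le> 10/9 * exp (- (L * \<epsilon>^2))" by simp
  finally have fin: "2 * exp (real k * s * (\<mu>^2 - \<mu>*t)) \<le> 10/9 * exp (- (L * \<epsilon>^2))" .
  have "measure_pmf.prob P {x. \<bar>R x / s - 1\<bar> \<le> t} \<ge> 1 - 10/9 * exp (- (L * \<epsilon>^2))"
    using pgood pbad fin by linarith
  then show ?thesis unfolding seteq sample_pmf_def P_def[symmetric] L_def by simp
qed

end
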